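(* Let $M>0$, $\beta^*>0$, and let $g$ be the log-normal density $g(t)=\frac{1}{t\sigma\sqrt{2\pi}}\exp\!\big(-\frac{(\ln t-\mu)^2}{2\sigma^2}\big)$ for $t>0$, $g(t)=0$ for $t\le0$ ($\mu\in\mathbb{R}$, $\sigma>0$). Let $I$ be the unique $C^1$ solution on $[0,\infty)$ of \[ I'(t)=\beta^*(M-I(t))\Big(I(t)-\int_0^t g(t-s)I(s)\,ds\Big),\qquad I(0)=I_0\in[0,M]. \] Then $\lim_{t\to\infty}I'(t)=0$. *)

theory Defs
  imports "HOL-Analysis.Analysis"
begin

definition lognormal_density :: "real \<Rightarrow> real \<Rightarrow> real \<Rightarrow> real" where
  "lognormal_density \<mu> \<sigma> t =
     (if t > 0 then 1 / (t * \<sigma> * sqrt (2 * pi)) * exp (- ((ln t - \<mu>)^2) / (2 * \<sigma>^2))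
      else 0)"

end

theory Submission
  imports Defs "HOL-Probability.Distributions"
begin

lemma quad_ineq:
  fixes \<sigma> \<mu> u k :: real
  assumes "\<sigma> > 0"
  shows "- ((u - \<mu>)^2) / (2*\<sigma>^2) \<le> k*u - k*\<mu> + k^2*\<sigma>^2/2"
proof -
  have "k*u - k*\<mu> + k^2*\<sigma>^2/2 - (- ((u - \<mu>)^2) / (2*\<sigma>^2)) = ((u-\<mu>) + k*\<sigma>^2)^2/(2*\<sigma>^2)"
    using assms by (simp add: field_simps power2_eq_square)
  moreover have "((u-\<mu>) + k*\<sigma>^2)^2/(2*\<sigma>^2) \<ge> 0" by simp
  ultimately show ?thesis by linarith
qed

lemma lnd_nonneg: "\<sigma> > 0 \<Longrightarrow> 0 \<le> lognormal_density \<mu> \<sigma> t"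
  by (simp add: lognormal_density_def)

lemma lnd_pos_bound:
  fixes k :: nat and \<sigma> \<mu> t :: real
  assumes "\<sigma> > 0" "t > 0" "k \<ge> 1"
  shows "lognormal_density \<mu> \<sigma> t \<le> 1/(\<sigma> * sqrt (2*pi)) * exp ((real k)^2*\<sigma>^2/2 - real k*\<mu>) * t^(k-1)"
proof -
  have e: "exp (- ((ln t - \<mu>)^2) / (2*\<sigma>^2)) \<le> exp (real k * ln t - k*\<mu> + (real k)^2*\<sigma>^2/2)"
    using quad_ineq[OF assms(1), of "ln t" \<mu> "real k"] by simp
  have "exp (real k * ln t - k*\<mu> + (real k)^2*\<sigma>^2/2) = t^k * exp ((real k)^2*\<sigma>^2/2 - real k*\<mu>)"
  proof -
    have "exp (real k * ln t - k*\<mu> + (real k)^2*\<sigma>^2/2) = exp (real k * ln t) * exp ((real k)^2*\<sigma>^2/2 - real k*\<mu>)"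
      by (simp add: exp_add[symmetric])
    also have "exp (real k * ln t) = t^k" using assms by (simp add: exp_of_nat_mult)
    finally show ?thesis .
  qed
  also have "t^k = t * t^(k-1)" using assms(3) by (cases k) auto
  finally have e2: "exp (- ((ln t - \<mu>)^2) / (2*\<sigma>^2)) \<le> t * (t^(k-1) * exp ((real k)^2*\<sigma>^2/2 - real k*\<mu>))"
    using e by simp
  have "lognormal_density \<mu> \<sigma> t = 1/(\<sigma> * sqrt (2*pi)) / t * exp (- ((ln t - \<mu>)^2) / (2*\<sigma>^2))"
    using assms by (simp add: lognormal_density_def)
  also have "\<dots> \<le> 1/(\<sigma> * sqrt (2*pi)) / t * (t * (t^(k-1) * exp ((real k)^2*\<sigma>^2/2 - real k*\<mu>)))"
    using e2 assms by (intro mult_left_mono) auto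
  also have "\<dots> = 1/(\<sigma> * sqrt (2*pi)) * exp ((real k)^2*\<sigma>^2/2 - real k*\<mu>) * t^(k-1)"
    using assms by simp
  finally show ?thesis .
qed

definition gmx :: "real \<Rightarrow> real \<Rightarrow> real" where
  "gmx \<mu> \<sigma> = 1/(\<sigma> * sqrt (2*pi)) * exp (\<sigma>^2/2 - \<mu>)"

lemma lnd_le_gmx:
  fixes \<sigma> \<mu> t :: real
  assumes "\<sigma> > 0"
  shows "lognormal_density \<mu> \<sigma> t \<le> gmx \<mu> \<sigma>"
proof (cases "t > 0")
  case True
  then show ?thesis using lnd_pos_bound[OF assms True, of 1 \<mu>] by (simp add: gmx_def)
next
  case False
  then show ?thesis using assms by (simp add: lognormal_density_def gmx_def)
qed

lemma gmx_pos: "\<sigma> > 0 \<Longrightarrow> gmx \<mu> \<sigma> > 0"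
  by (simp add: gmx_def)

lemma lnd_le_lin:
  fixes \<sigma> \<mu> t :: real
  assumes "\<sigma> > 0"
  shows "\<bar>lognormal_density \<mu> \<sigma> t\<bar> \<le> 1/(\<sigma> * sqrt (2*pi)) * exp (2*\<sigma>^2 - 2*\<mu>) * \<bar>t\<bar>"
proof (cases "t > 0")
  case True
  then show ?thesis using lnd_pos_bound[OF assms True, of 2 \<mu>] lnd_nonneg[OF assms, of \<mu> t] by simp
next
  case False
  then have "lognormal_density \<mu> \<sigma> t = 0" by (simp add: lognormal_density_def)
  moreover have "0 \<le> 1/(\<sigma> * sqrt (2*pi)) * exp (2*\<sigma>^2 - 2*\<mu>) * \<bar>t\<bar>"
    using assms by (intro mult_nonneg_nonneg) auto
  ultimately show ?thesis by simp
qed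

lemma lnd_cont:
  fixes \<sigma> \<mu> :: real
  assumes "\<sigma> > 0"
  shows "continuous_on UNIV (lognormal_density \<mu> \<sigma>)"
proof -
  let ?g = "lognormal_density \<mu> \<sigma>"
  have c1: "continuous_on {0<..} (\<lambda>t. 1 / (t * \<sigma> * sqrt (2 * pi)) * exp (- ((ln t - \<mu>)^2) / (2 * \<sigma>^2)))"
    using assms by (intro continuous_intros) auto
  have c1': "continuous_on {0<..} ?g"
    using c1 by (rule continuous_on_cong[THEN iffD1, rotated 2]) (auto simp: lognormal_density_def)
  have c2': "continuous_on {..<0} ?g"
    by (rule continuous_on_cong[THEN iffD1, of _ _ "\<lambda>_. 0", rotated 2]) (auto simp: lognormal_density_def)
  have z: "isCont ?g 0"
  proof -
    let ?K = "1/(\<sigma> * sqrt (2*pi)) * exp (2*\<sigma>^2 - 2*\<mu>)"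
    have "((\<lambda>t. ?K * \<bar>t\<bar>) \<longlongrightarrow> ?K * \<bar>0\<bar>) (at 0)"
      by (intro tendsto_intros)
    then have l: "((\<lambda>t. ?K * \<bar>t\<bar>) \<longlongrightarrow> 0) (at 0)" by simp
    have "(?g \<longlongrightarrow> 0) (at 0)"
      by (rule Lim_null_comparison[OF _ l]) (use lnd_le_lin[OF assms] in auto)
    then show ?thesis unfolding isCont_def by (simp add: lognormal_density_def)
  qed
  have "isCont ?g x" for x
  proof -
    consider "x > 0" | "x < 0" | "x = 0" by linarith
    then show ?thesis
    proof cases
      case 1 then show ?thesis using c1' continuous_on_eq_continuous_at[OF open_greaterThan] by auto
    next
      case 2 then show ?thesis using c2' continuous_on_eq_continuous_at[OF open_lessThan] by auto
    next
      case 3 then show ?thesis using z by simp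
    qed
  qed
  then show ?thesis by (simp add: continuous_on_eq_continuous_at)
qed

lemma lnd_exp:
  fixes \<sigma> \<mu> u :: real
  assumes "\<sigma> > 0"
  shows "exp u * lognormal_density \<mu> \<sigma> (exp u) = normal_density \<mu> \<sigma> u"
  using assms by (simp add: lognormal_density_def normal_density_def real_sqrt_mult field_simps)

lemma normal_cont: "(\<sigma>::real) > 0 \<Longrightarrow> continuous_on S (normal_density \<mu> \<sigma>)"
  unfolding normal_density_def by (intro continuous_intros) auto

lemma normal_int_le1:
  fixes \<sigma> \<mu> x y :: real
  assumes "\<sigma> > 0"
  shows "integral {x..y} (normal_density \<mu> \<sigma>) \<le> 1"
proof -
  have h: "(normal_density \<mu> \<sigma> has_integral 1) UNIV"
    using has_integral_integral_lborel[OF integrable_normal_density[where \<mu>=\<mu> and \<sigma>=\<sigma>]] assms by simp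
  have "integral {x..y} (normal_density \<mu> \<sigma>) \<le> integral UNIV (normal_density \<mu> \<sigma>)"
    by (rule integral_subset_le) (use h integrable_continuous_interval[OF normal_cont[OF assms]] in auto)
  also have "\<dots> = 1" using h by (rule integral_unique)
  finally show ?thesis .
qed

lemma normal_int_pos:
  fixes \<sigma> \<mu> p :: real
  assumes "\<sigma> > 0"
  shows "integral {p..p+1} (normal_density \<mu> \<sigma>) > 0"
proof -
  obtain x0 where x0: "x0 \<in> {p..p+1}" "\<forall>y\<in>{p..p+1}. normal_density \<mu> \<sigma> x0 \<le> normal_density \<mu> \<sigma> y"
    using continuous_attains_inf[of "{p..p+1}" "normal_density \<mu> \<sigma>"] normal_cont[OF assms] by auto
  have "integral {p..p+1} (\<lambda>_. normal_density \<mu> \<sigma> x0) \<le> integral {p..p+1} (normal_density \<mu> \<sigma>)"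
    by (rule integral_le) (use x0 integrable_continuous_interval[OF normal_cont[OF assms]] in auto)
  moreover have "integral {p..p+1} (\<lambda>_. normal_density \<mu> \<sigma> x0) = normal_density \<mu> \<sigma> x0" by simp
  moreover have "normal_density \<mu> \<sigma> x0 > 0" using normal_density_pos[OF assms] .
  ultimately show ?thesis by linarith
qed

lemma lnd_subst:
  fixes \<sigma> \<mu> a T :: real
  assumes "\<sigma> > 0" "0 < a" "a \<le> T"
  shows "integral {a..T} (lognormal_density \<mu> \<sigma>) = integral {ln a..ln T} (normal_density \<mu> \<sigma>)"
proof -
  have "((\<lambda>x. exp x *\<^sub>R lognormal_density \<mu> \<sigma> (exp x)) has_integral integral {exp (ln a)..exp (ln T)} (lognormal_density \<mu> \<sigma>)) {ln a..ln T}"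
  proof (rule has_integral_substitution[where c=a and d=T])
    show "ln a \<le> ln T" using assms by simp
    show "exp (ln a) \<le> exp (ln T)" using assms by simp
    show "exp ` {ln a..ln T} \<subseteq> {a..T}" using assms
      by auto (metis exp_le_cancel_iff exp_ln_iff less_le_trans)+
    show "continuous_on {a..T} (lognormal_density \<mu> \<sigma>)"
      using lnd_cont[OF assms(1)] continuous_on_subset by blast
    show "(exp has_real_derivative exp x) (at x within {ln a..ln T})" for x
      by (auto intro!: derivative_eq_intros)
  qed
  then have "(normal_density \<mu> \<sigma> has_integral integral {a..T} (lognormal_density \<mu> \<sigma>)) {ln a..ln T}"
    using assms lnd_exp[OF assms(1)] by simp
  then show ?thesis by (simp add: integral_unique)
qed

lemma G_lt1:
  fixes \<sigma> \<mu> T :: real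
  assumes "\<sigma> > 0" "T \<ge> 0"
  shows "integral {0..T} (lognormal_density \<mu> \<sigma>) < 1"
proof (cases "T = 0")
  case True then show ?thesis by simp
next
  case False
  then have T: "T > 0" using assms by simp
  let ?g = "lognormal_density \<mu> \<sigma>"
  let ?\<phi> = "normal_density \<mu> \<sigma>"
  define e where "e = integral {ln T..ln T+1} ?\<phi>"
  have e: "e > 0" unfolding e_def by (rule normal_int_pos[OF assms(1)])
  define a where "a = min T (e / (2 * (gmx \<mu> \<sigma> + 1)))"
  have gp: "gmx \<mu> \<sigma> > 0" using gmx_pos[OF assms(1)] .
  have a: "0 < a" "a \<le> T" using T e gp by (auto simp: a_def)
  have ae: "a * gmx \<mu> \<sigma> \<le> e/2"
  proof -
    have "a * gmx \<mu> \<sigma> \<le> e / (2 * (gmx \<mu> \<sigma> + 1)) * gmx \<mu> \<sigma>"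
      using gp by (intro mult_right_mono) (auto simp: a_def)
    also have "\<dots> \<le> e / (2 * (gmx \<mu> \<sigma> + 1)) * (gmx \<mu> \<sigma> + 1)"
      using gp e by (intro mult_left_mono) auto
    also have "\<dots> = e/2" using gp by (simp add: field_simps)
    finally show ?thesis .
  qed
  have cont: "continuous_on S ?g" for S using lnd_cont[OF assms(1)] continuous_on_subset by blast
  have "integral {0..T} ?g = integral {0..a} ?g + integral {a..T} ?g"
    using a by (intro Henstock_Kurzweil_Integration.integral_combine[symmetric] integrable_continuous_interval cont) auto
  moreover have "integral {0..a} ?g \<le> gmx \<mu> \<sigma> * (a - 0)"
  proof -
    have "norm (integral {0..a} ?g) \<le> gmx \<mu> \<sigma> * (a - 0)"
      by (rule integral_bound) (use a cont lnd_le_gmx[OF assms(1)] lnd_nonneg[OF assms(1)] in auto)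
    then show ?thesis by simp
  qed
  moreover have "integral {a..T} ?g = integral {ln a..ln T} ?\<phi>" by (rule lnd_subst[OF assms(1) a])
  moreover have "integral {ln a..ln T} ?\<phi> + e = integral {ln a..ln T + 1} ?\<phi>"
    unfolding e_def using a by (intro Henstock_Kurzweil_Integration.integral_combine integrable_continuous_interval normal_cont assms) auto
  moreover have "integral {ln a..ln T + 1} ?\<phi> \<le> 1" by (rule normal_int_le1[OF assms(1)])
  ultimately show ?thesis using ae e by (simp add: algebra_simps)
qed

lemma G_nonneg:
  assumes "\<sigma> > 0"
  shows "0 \<le> integral {a..b} (lognormal_density \<mu> \<sigma>)"
  by (rule integral_nonneg) (use lnd_nonneg[OF assms] integrable_continuous_interval lnd_cont[OF assms] continuous_on_subset in blast)+

lemma G_mono: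
  assumes "\<sigma> > 0" "0 \<le> x" "x \<le> y"
  shows "integral {0..x} (lognormal_density \<mu> \<sigma>) \<le> integral {0..y} (lognormal_density \<mu> \<sigma>)"
proof -
  have cont: "continuous_on S (lognormal_density \<mu> \<sigma>)" for S using lnd_cont[OF assms(1)] continuous_on_subset by blast
  have "integral {0..y} (lognormal_density \<mu> \<sigma>) = integral {0..x} (lognormal_density \<mu> \<sigma>) + integral {x..y} (lognormal_density \<mu> \<sigma>)"
    using assms Henstock_Kurzweil_Integration.integral_combine[of 0 x y "lognormal_density \<mu> \<sigma>"] integrable_continuous_interval[OF cont] by auto
  then show ?thesis using G_nonneg[OF assms(1), where \<mu>=\<mu> and a=x and b=y] by simp
qed

lemma refl_int:
  fixes f :: "real \<Rightarrow> real"
  assumes "continuous_on UNIV f" "a \<le> t"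
  shows "integral {a..t} (\<lambda>s. f (t - s)) = integral {0..t-a} f"
proof -
  have "integral {a..t} (\<lambda>s. f (t - s)) = integral {a..t} (\<lambda>s. (\<lambda>y. f (t + y)) (- s))" by simp
  also have "\<dots> = integral {-t..-a} (\<lambda>y. f (t + y))"
    using Henstock_Kurzweil_Integration.integral_reflect_real[of "-a" "-t" "\<lambda>y. f (t + y)"] by simp
  also have "\<dots> = integral {-t..-a} (f \<circ> (\<lambda>x. x + t))" by (simp add: o_def add.commute)
  also have "\<dots> = integral {-t + t..-a + t} f"
    by (rule integral_shift) (use assms continuous_on_subset in blast)
  finally show ?thesis by simp
qed

lemma mvt_abs:
  fixes f f' :: "real \<Rightarrow> real"
  assumes "a \<le> b" "\<And>x. a < x \<Longrightarrow> x < b \<Longrightarrow> (f has_real_derivative f' x) (at x)"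
    "continuous_on {a..b} f" "\<And>x. a < x \<Longrightarrow> x < b \<Longrightarrow> \<bar>f' x\<bar> \<le> B"
  shows "\<bar>f b - f a\<bar> \<le> B * (b - a)"
proof -
  have 1: "B * a - f a \<le> B * b - f b"
  proof (rule DERIV_nonneg_imp_increasing_open[OF assms(1)])
    fix x assume x: "a < x" "x < b"
    show "\<exists>y. ((\<lambda>x. B * x - f x) has_real_derivative y) (at x) \<and> 0 \<le> y"
      using assms(2)[OF x] assms(4)[OF x]
      by (intro exI[of _ "B - f' x"]) (auto intro!: derivative_eq_intros)
  next
    show "continuous_on {a..b} (\<lambda>x. B * x - f x)" using assms(3) by (intro continuous_intros)
  qed
  have 2: "B * a + f a \<le> B * b + f b"
  proof (rule DERIV_nonneg_imp_increasing_open[OF assms(1)])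
    fix x assume x: "a < x" "x < b"
    show "\<exists>y. ((\<lambda>x. B * x + f x) has_real_derivative y) (at x) \<and> 0 \<le> y"
      using assms(2)[OF x] assms(4)[OF x]
      by (intro exI[of _ "B + f' x"]) (auto intro!: derivative_eq_intros)
  next
    show "continuous_on {a..b} (\<lambda>x. B * x + f x)" using assms(3) by (intro continuous_intros)
  qed
  show ?thesis using 1 2 by (simp add: algebra_simps abs_le_iff)
qed

lemma gron:
  fixes f f' :: "real \<Rightarrow> real" and a t :: real
  assumes cont: "continuous_on {a..} f"
    and der: "\<And>x. a < x \<Longrightarrow> (f has_real_derivative f' x) (at x)"
    and fa: "f a = 0"
    and bnd: "\<And>T. \<exists>C\<ge>0. \<forall>t\<in>{a..T}. \<forall>m. (\<forall>s\<in>{a..t}. \<bar>f s\<bar> \<le> m) \<longrightarrow> \<bar>f' t\<bar> \<le> C*m"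
    and t: "a \<le> t"
  shows "f t = 0"
proof -
  obtain C where C: "C \<ge> 0" "\<forall>x\<in>{a..t}. \<forall>m. (\<forall>s\<in>{a..x}. \<bar>f s\<bar> \<le> m) \<longrightarrow> \<bar>f' x\<bar> \<le> C*m"
    using bnd[of t] by blast
  define \<delta> where "\<delta> = 1 / (2*C + 2)"
  have \<delta>: "\<delta> > 0" "C * \<delta> \<le> 1/2" using C by (auto simp: \<delta>_def field_simps)
  have claim: "\<forall>s\<in>{a..min t (a + real k * \<delta>)}. f s = 0" for k :: nat
  proof (induction k)
    case 0
    then show ?case using fa by auto
  next
    case (Suc k)
    define b where "b = min t (a + real k * \<delta>)"
    define b' where "b' = min t (a + real (Suc k) * \<delta>)"
    have bb: "a \<le> b" "b \<le> b'" "b' - b \<le> \<delta>" "b' \<le> t" using t \<delta> by (auto simp: b_def b'_def algebra_simps)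
    have contb: "continuous_on {a..b'} (\<lambda>s. \<bar>f s\<bar>)"
      by (intro continuous_intros continuous_on_subset[OF cont]) auto
    obtain x0 where x0: "x0 \<in> {a..b'}" "\<forall>y\<in>{a..b'}. \<bar>f y\<bar> \<le> \<bar>f x0\<bar>"
      using continuous_attains_sup[OF compact_Icc _ contb] bb by auto
    define m where "m = \<bar>f x0\<bar>"
    have m0: "m \<ge> 0" by (simp add: m_def)
    have "m \<le> m / 2"
    proof (cases "x0 \<le> b")
      case True
      then show ?thesis using Suc.IH x0(1) by (simp add: m_def b_def)
    next
      case False
      have "\<bar>f x0 - f b\<bar> \<le> (C*m) * (x0 - b)"
      proof (rule mvt_abs)
        show "b \<le> x0" using False by simp
        show "(f has_real_derivative f' x) (at x)" if "b < x" "x < x0" for x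
          using der that bb by auto
        show "continuous_on {b..x0} f" by (rule continuous_on_subset[OF cont]) (use bb in auto)
        show "\<bar>f' x\<bar> \<le> C*m" if "b < x" "x < x0" for x
          using C(2) that bb x0 unfolding m_def by auto
      qed
      moreover have "f b = 0" using Suc.IH bb by (auto simp: b_def)
      moreover have "(C*m) * (x0 - b) \<le> (C*m) * \<delta>"
        using C m0 x0 bb by (intro mult_left_mono) auto
      moreover have "(C*m) * \<delta> \<le> m/2" using \<delta> m0
        by (metis mult.commute mult.left_commute mult_left_mono times_divide_eq_right mult.right_neutral)
      ultimately show ?thesis by (simp add: m_def)
    qed
    then have "m \<le> 0" by simp
    then show ?case using x0 unfolding m_def b'_def by fastforce
  qed
  define k where "k = nat \<lceil>(t - a)/\<delta>\<rceil>"
  have "(t - a)/\<delta> \<le> real k" unfolding k_def by linarith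
  then have "t - a \<le> real k * \<delta>" using \<delta> by (simp add: field_simps)
  then have "min t (a + real k * \<delta>) = t" by simp
  then show ?thesis using claim[of k] t by auto
qed

lemma mono_tendsto_sup:
  fixes f :: "real \<Rightarrow> real"
  assumes mono: "\<And>x y. 0 \<le> x \<Longrightarrow> x \<le> y \<Longrightarrow> f x \<le> f y" and bd: "\<And>x. 0 \<le> x \<Longrightarrow> f x \<le> B"
  shows "(f \<longlongrightarrow> (SUP x\<in>{0..}. f x)) at_top"
proof (rule order_tendstoI)
  have bda: "bdd_above (f ` {0..})" using bd by (auto intro!: bdd_aboveI)
  fix a assume "a < (SUP x\<in>{0..}. f x)"
  then obtain x0 where x0: "x0 \<in> {0..}" "a < f x0" using less_cSUP_iff[of "{0..}" f a] bda by auto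
  show "\<forall>\<^sub>F x in at_top. a < f x"
    unfolding eventually_at_top_linorder
    by (rule exI[of _ x0]) (use x0 mono in force)
next
  have bda: "bdd_above (f ` {0..})" using bd by (auto intro!: bdd_aboveI)
  fix a assume a: "(SUP x\<in>{0..}. f x) < a"
  show "\<forall>\<^sub>F x in at_top. f x < a"
    unfolding eventually_at_top_linorder
    by (rule exI[of _ 0]) (use a cSUP_upper[OF _ bda] in force)
qed

lemma half_at_top: "filterlim (\<lambda>t::real. t/2) at_top at_top"
  unfolding filterlim_at_top eventually_at_top_linorder
proof
  fix Z :: real
  show "\<exists>N. \<forall>n\<ge>N. Z \<le> n / 2" by (rule exI[of _ "2*Z"]) auto
qed

theorem proposition3p8:
  fixes M \<beta> \<mu> \<sigma> I0 :: real and I I' :: "real \<Rightarrow> real"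
  assumes "M > 0" and "\<beta> > 0" and "\<sigma> > 0"
    and "0 \<le> I0" and "I0 \<le> M"
    and "I 0 = I0"
    and "\<And>t. t \<ge> 0 \<Longrightarrow> (I has_real_derivative I' t) (at t within {0..})"
    and "continuous_on {0..} I'"
    and "\<And>t. t \<ge> 0 \<Longrightarrow>
           I' t = \<beta> * (M - I t) *
                  (I t - integral {0..t} (\<lambda>s. lognormal_density \<mu> \<sigma> (t - s) * I s))"
  shows "(I' \<longlongrightarrow> 0) at_top"
proof -
  note Mpos = assms(1) and bpos = assms(2) and spos = assms(3) and I00 = assms(4) and I0M = assms(5)
    and II0 = assms(6) and derw = assms(7) and contI' = assms(8) and ode = assms(9)
  define g where "g = lognormal_density \<mu> \<sigma>"
  define gm where "gm = gmx \<mu> \<sigma>"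
  define conv where "conv t = integral {0..t} (\<lambda>s. g (t - s) * I s)" for t
  define G where "G t = integral {0..t} g" for t
  have ode': "I' t = \<beta> * (M - I t) * (I t - conv t)" if "t \<ge> 0" for t
    using ode[OF that] by (simp add: conv_def g_def)
  have gcont: "continuous_on S g" for S using lnd_cont[OF spos] continuous_on_subset unfolding g_def by blast
  have g0: "0 \<le> g t" for t using lnd_nonneg[OF spos] by (simp add: g_def)
  have ggm: "g t \<le> gm" for t using lnd_le_gmx[OF spos] by (simp add: g_def gm_def)
  have gm0: "gm > 0" using gmx_pos[OF spos] by (simp add: gm_def)
  have Glt1: "G t < 1" if "t \<ge> 0" for t using G_lt1[OF spos that] by (simp add: G_def g_def)
  have G0: "0 \<le> G t" for t using G_nonneg[OF spos] by (simp add: G_def g_def)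
  have Gmono: "G x \<le> G y" if "0 \<le> x" "x \<le> y" for x y using G_mono[OF spos that] by (simp add: G_def g_def)
  have contI: "continuous_on {0..} I"
    by (rule DERIV_continuous_on) (use derw in auto)
  have der: "(I has_real_derivative I' x) (at x)" if "x > 0" for x
  proof -
    have "at x within {0..} = at x"
      by (rule at_within_interior) (use that in simp)
    then show ?thesis using derw[of x] that by simp
  qed
  have contIS: "continuous_on S I" if "S \<subseteq> {0..}" for S using contI continuous_on_subset that by blast
  have contF: "continuous_on {0..t} (\<lambda>s. g (t - s) * I s)" for t
  proof (intro continuous_intros contIS)
    show "continuous_on {0..t} (\<lambda>s. g (t - s))"
      by (rule continuous_on_compose2[OF gcont[of UNIV]]) (auto intro!: continuous_intros)
  qed auto
  have intF: "(\<lambda>s. g (t - s) * I s) integrable_on {a..b}" if "0 \<le> a" "b \<le> t" for a b t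
    by (rule integrable_continuous_interval, rule continuous_on_subset[OF contF[of t]]) (use that in auto)
  have convb: "\<bar>conv t\<bar> \<le> gm * m * t" if "t \<ge> 0" "\<forall>s\<in>{0..t}. \<bar>I s\<bar> \<le> m" for t m
  proof -
    have "norm (integral {0..t} (\<lambda>s. g (t - s) * I s)) \<le> (gm * m) * (t - 0)"
    proof (rule integral_bound)
      show "norm (g (t - s) * I s) \<le> gm * m" if "s \<in> {0..t}" for s
      proof -
        have "\<bar>I s\<bar> \<le> m" using that \<open>\<forall>s\<in>{0..t}. \<bar>I s\<bar> \<le> m\<close> by auto
        then have "g (t - s) * \<bar>I s\<bar> \<le> gm * m"
          using g0[of "t-s"] ggm[of "t-s"] gm0 by (intro mult_mono) auto
        then show ?thesis using g0[of "t-s"] by (simp add: abs_mult)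
      qed
    qed (use that contF in auto)
    then show ?thesis by (simp add: conv_def)
  qed
  have Ibound: "\<exists>B\<ge>0. \<forall>s\<in>{0..T}. \<bar>I s\<bar> \<le> B" for T
  proof (cases "T \<ge> 0")
    case True
    have "continuous_on {0..T} (\<lambda>s. \<bar>I s\<bar>)" by (intro continuous_intros contIS) auto
    moreover have "{0..T} \<noteq> {}" using True by simp
    ultimately obtain x0 where "x0 \<in> {0..T}" "\<forall>y\<in>{0..T}. \<bar>I y\<bar> \<le> \<bar>I x0\<bar>"
      using continuous_attains_sup[OF compact_Icc] by metis
    then show ?thesis by (intro exI[of _ "\<bar>I x0\<bar>"]) auto
  next
    case False
    then show ?thesis by (intro exI[of _ 0]) auto
  qed
  have uniqM: "I t = M" if "0 \<le> t0" "I t0 = M" "t0 \<le> t" for t0 t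
  proof -
    have "(\<lambda>t. I t - M) t = 0"
    proof (rule gron[where f="\<lambda>t. I t - M" and f' = I' and a=t0])
      show "continuous_on {t0..} (\<lambda>t. I t - M)" by (intro continuous_intros contIS) (use that in auto)
      show "((\<lambda>t. I t - M) has_real_derivative I' x) (at x)" if "t0 < x" for x
        using der[of x] that \<open>0 \<le> t0\<close> by (auto intro!: derivative_eq_intros)
      show "I t0 - M = 0" using that by simp
      show "t0 \<le> t" by fact
      fix T
      obtain B where B: "B \<ge> 0" "\<forall>s\<in>{0..T}. \<bar>I s\<bar> \<le> B" using Ibound by blast
      show "\<exists>C\<ge>0. \<forall>t\<in>{t0..T}. \<forall>m. (\<forall>s\<in>{t0..t}. \<bar>I s - M\<bar> \<le> m) \<longrightarrow> \<bar>I' t\<bar> \<le> C * m"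
      proof (intro exI[of _ "\<beta> * (B + gm * B * \<bar>T\<bar>)"] conjI ballI allI impI)
        show "0 \<le> \<beta> * (B + gm * B * \<bar>T\<bar>)" using bpos B gm0 by auto
        fix t m assume t: "t \<in> {t0..T}" and m: "\<forall>s\<in>{t0..t}. \<bar>I s - M\<bar> \<le> m"
        have t0': "t \<ge> 0" using t \<open>0 \<le> t0\<close> by auto
        have mt: "\<bar>M - I t\<bar> \<le> m" using m t by (auto simp: abs_minus_commute)
        have cb: "\<bar>conv t\<bar> \<le> gm * B * t" using convb[OF t0', of B] B t by auto
        have "\<bar>I t - conv t\<bar> \<le> B + gm * B * \<bar>T\<bar>"
        proof -
          have "\<bar>I t\<bar> \<le> B" using B t t0' by auto
          moreover have "gm * B * t \<le> gm * B * \<bar>T\<bar>" using t t0' gm0 B by (intro mult_left_mono) auto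
          ultimately show ?thesis using cb by linarith
        qed
        then have "\<bar>M - I t\<bar> * \<bar>I t - conv t\<bar> \<le> m * (B + gm * B * \<bar>T\<bar>)"
          using mt by (intro mult_mono) auto
        then have "\<beta> * (\<bar>M - I t\<bar> * \<bar>I t - conv t\<bar>) \<le> \<beta> * (m * (B + gm * B * \<bar>T\<bar>))"
          using bpos by (intro mult_left_mono) auto
        then have "\<bar>I' t\<bar> \<le> \<beta> * (m * (B + gm * B * \<bar>T\<bar>))"
          using ode'[OF t0'] bpos by (simp add: abs_mult)
        then show "\<bar>I' t\<bar> \<le> \<beta> * (B + gm * B * \<bar>T\<bar>) * m" by (simp add: algebra_simps)
      qed
    qed
    then show ?thesis by simp
  qed
  have contgt: "continuous_on S (\<lambda>s. g (t - s))" for t S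
    by (rule continuous_on_compose2[OF gcont[of UNIV]]) (auto intro!: continuous_intros)
  have intgt: "(\<lambda>s. g (t - s) * c) integrable_on {a..b}" for a b t c
    by (intro integrable_continuous_interval continuous_intros contgt)
  have Grefl: "integral {a..t} (\<lambda>s. g (t - s) * c) = G (t - a) * c" if "a \<le> t" for a t c
  proof -
    have "integral {a..t} (\<lambda>s. g (t - s) * c) = integral {a..t} (\<lambda>s. g (t - s)) * c"
      by (rule integral_mult_left)
    also have "integral {a..t} (\<lambda>s. g (t - s)) = G (t - a)"
      unfolding G_def by (rule refl_int[OF gcont that])
    finally show ?thesis .
  qed
  have convU: "conv t \<le> I t * G t" if "t \<ge> 0" "\<forall>s\<in>{0..t}. I s \<le> I t" for t
  proof -
    have "conv t \<le> integral {0..t} (\<lambda>s. g (t - s) * I t)"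
      unfolding conv_def
    proof (rule integral_le)
      show "(\<lambda>s. g (t - s) * I s) integrable_on {0..t}" by (rule intF) auto
      show "(\<lambda>s. g (t - s) * I t) integrable_on {0..t}" by (rule intgt)
      show "g (t - s) * I s \<le> g (t - s) * I t" if "s \<in> {0..t}" for s
        using that \<open>\<forall>s\<in>{0..t}. I s \<le> I t\<close> g0[of "t-s"] by (intro mult_left_mono) auto
    qed
    also have "\<dots> = G t * I t" using Grefl[of 0 t "I t"] that by simp
    finally show ?thesis by (simp add: mult.commute)
  qed
  have convL: "I (t/2) * G (t/2) \<le> conv t"
    if "t \<ge> 0" "\<forall>x y. 0 \<le> x \<longrightarrow> x \<le> y \<longrightarrow> y \<le> t \<longrightarrow> I x \<le> I y" "\<forall>s\<in>{0..t}. 0 \<le> I s" for t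
  proof -
    have F0: "0 \<le> g (t - s) * I s" if "s \<in> {0..t}" for s
      using that \<open>\<forall>s\<in>{0..t}. 0 \<le> I s\<close> g0[of "t-s"] by auto
    have "conv t = integral {0..t/2} (\<lambda>s. g (t - s) * I s) + integral {t/2..t} (\<lambda>s. g (t - s) * I s)"
      unfolding conv_def using that(1)
      by (intro Henstock_Kurzweil_Integration.integral_combine[symmetric] intF) auto
    moreover have "0 \<le> integral {0..t/2} (\<lambda>s. g (t - s) * I s)"
      by (rule integral_nonneg) (use intF that(1) F0 in auto)
    moreover have "integral {t/2..t} (\<lambda>s. g (t - s) * I (t/2)) \<le> integral {t/2..t} (\<lambda>s. g (t - s) * I s)"
    proof (rule integral_le)
      show "(\<lambda>s. g (t - s) * I s) integrable_on {t/2..t}" by (rule intF) (use that in auto)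
      show "(\<lambda>s. g (t - s) * I (t/2)) integrable_on {t/2..t}" by (rule intgt)
      show "g (t - s) * I (t/2) \<le> g (t - s) * I s" if "s \<in> {t/2..t}" for s
        using that \<open>\<forall>x y. 0 \<le> x \<longrightarrow> x \<le> y \<longrightarrow> y \<le> t \<longrightarrow> I x \<le> I y\<close> \<open>t \<ge> 0\<close> g0[of "t-s"]
        by (intro mult_left_mono) auto
    qed
    moreover have "integral {t/2..t} (\<lambda>s. g (t - s) * I (t/2)) = I (t/2) * G (t/2)"
      using Grefl[of "t/2" t "I (t/2)"] that(1) by (simp add: mult.commute)
    ultimately show ?thesis by linarith
  qed
  show ?thesis
  proof (cases "I0 = 0")
    case True
    have I0z: "I t = 0" if "t \<ge> 0" for t
    proof (rule gron[where f=I and f'=I' and a=0])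
      show "continuous_on {0..} I" by (rule contI)
      show "(I has_real_derivative I' x) (at x)" if "0 < x" for x using der that by auto
      show "I 0 = 0" using II0 True by simp
      show "0 \<le> t" by fact
      fix T
      obtain B where B: "B \<ge> 0" "\<forall>s\<in>{0..T}. \<bar>I s\<bar> \<le> B" using Ibound by blast
      show "\<exists>C\<ge>0. \<forall>t\<in>{0..T}. \<forall>m. (\<forall>s\<in>{0..t}. \<bar>I s\<bar> \<le> m) \<longrightarrow> \<bar>I' t\<bar> \<le> C * m"
      proof (intro exI[of _ "\<beta> * ((M + B) * (1 + gm * \<bar>T\<bar>))"] conjI ballI allI impI)
        show "0 \<le> \<beta> * ((M + B) * (1 + gm * \<bar>T\<bar>))" using bpos B gm0 Mpos by auto
        fix t m assume t: "t \<in> {0..T}" and m: "\<forall>s\<in>{0..t}. \<bar>I s\<bar> \<le> m"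
        have t0': "t \<ge> 0" using t by auto
        have m0: "m \<ge> 0" using m t0' by (meson abs_ge_zero atLeastAtMost_iff order.trans order_refl)
        have "\<bar>I t\<bar> \<le> B" using B t by auto
        then have mt: "\<bar>M - I t\<bar> \<le> M + B" using Mpos by (simp add: abs_le_iff)
        have cb: "\<bar>conv t\<bar> \<le> gm * m * t" using convb[OF t0' m] .
        have "\<bar>I t - conv t\<bar> \<le> m * (1 + gm * \<bar>T\<bar>)"
        proof -
          have "\<bar>I t\<bar> \<le> m" using m t0' by auto
          moreover have "gm * m * t \<le> gm * m * \<bar>T\<bar>" using t t0' gm0 m0 by (intro mult_left_mono) auto
          ultimately show ?thesis using cb by (simp add: algebra_simps)
        qed
        then have "\<bar>M - I t\<bar> * \<bar>I t - conv t\<bar> \<le> (M + B) * (m * (1 + gm * \<bar>T\<bar>))"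
          using mt B Mpos by (intro mult_mono) auto
        then have "\<beta> * (\<bar>M - I t\<bar> * \<bar>I t - conv t\<bar>) \<le> \<beta> * ((M + B) * (m * (1 + gm * \<bar>T\<bar>)))"
          using bpos by (intro mult_left_mono) auto
        moreover have "\<bar>I' t\<bar> = \<beta> * (\<bar>M - I t\<bar> * \<bar>I t - conv t\<bar>)"
          using ode'[OF t0'] bpos by (simp add: abs_mult)
        ultimately show "\<bar>I' t\<bar> \<le> \<beta> * ((M + B) * (1 + gm * \<bar>T\<bar>)) * m"
          by (simp add: algebra_simps)
      qed
    qed
    have "I' t = 0" if "t \<ge> 0" for t
    proof -
      have "conv t = integral {0..t} (\<lambda>s. 0::real)"
        unfolding conv_def by (rule integral_cong) (use I0z in auto)
      then show ?thesis using ode'[OF that] I0z[OF that] by simp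
    qed
    then have "\<forall>\<^sub>F t in at_top. I' t = 0"
      unfolding eventually_at_top_linorder by (intro exI[of _ 0]) auto
    then show ?thesis by (rule tendsto_eventually)
  next
    case False
    then have I0p: "I0 > 0" using I00 by simp
    have nonneg: "\<forall>t\<ge>0. I' t \<ge> 0"
    proof (rule ccontr)
      assume neg: "\<not> (\<forall>t\<ge>0. I' t \<ge> 0)"
      define S where "S = {t. 0 \<le> t \<and> I' t < 0}"
      obtain t0 where "t0 \<ge> 0" "\<not> I' t0 \<ge> 0" using neg by blast
      then have "t0 \<in> S" by (simp add: S_def)
      then have Sne: "S \<noteq> {}" by blast
      have bdd: "bdd_below S" by (auto simp: S_def intro!: bdd_belowI[of _ 0])
      define \<tau> where "\<tau> = Inf S"
      have \<tau>0: "0 \<le> \<tau>" unfolding \<tau>_def by (rule cInf_greatest[OF Sne]) (auto simp: S_def)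
      have \<tau>le: "\<tau> \<le> t" if "t \<in> S" for t unfolding \<tau>_def by (rule cInf_lower[OF that bdd])
      have A: "I' t \<ge> 0" if "0 \<le> t" "t < \<tau>" for t
      proof (rule ccontr)
        assume "\<not> I' t \<ge> 0"
        then have "t \<in> S" using that by (auto simp: S_def)
        then show False using \<tau>le[of t] that by simp
      qed
      have mono\<tau>: "I x \<le> I y" if "0 \<le> x" "x \<le> y" "y \<le> \<tau>" for x y
      proof (rule DERIV_nonneg_imp_increasing_open[OF that(2)])
        fix z assume z: "x < z" "z < y"
        show "\<exists>d. (I has_real_derivative d) (at z) \<and> 0 \<le> d"
          using der[of z] A[of z] z that by (intro exI[of _ "I' z"]) auto
      next
        show "continuous_on {x..y} I" by (rule contIS) (use that in auto)
      qed
      have cont_at: "\<forall>e>0. \<exists>d>0. \<forall>x\<in>{0..}. dist x \<tau> < d \<longrightarrow> dist (I' x) (I' \<tau>) < e"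
        using contI' \<tau>0 unfolding continuous_on_iff by auto
      have C: "I' \<tau> \<le> 0"
      proof (rule ccontr)
        assume "\<not> I' \<tau> \<le> 0"
        then have "I' \<tau> > 0" by simp
        then obtain d where d: "d > 0" "\<forall>x\<in>{0..}. dist x \<tau> < d \<longrightarrow> dist (I' x) (I' \<tau>) < I' \<tau>"
          using cont_at by blast
        have "\<tau> + d \<le> Inf S"
        proof (rule cInf_greatest[OF Sne])
          fix t assume t: "t \<in> S"
          show "\<tau> + d \<le> t"
          proof (rule ccontr)
            assume "\<not> \<tau> + d \<le> t"
            then have "dist t \<tau> < d" using \<tau>le[OF t] by (simp add: dist_real_def)
            then have "dist (I' t) (I' \<tau>) < I' \<tau>" using d t by (auto simp: S_def)
            then show False using t by (auto simp: S_def dist_real_def)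
          qed
        qed
        then show False using d unfolding \<tau>_def by simp
      qed
      have D: "I' \<tau> \<ge> 0"
      proof (cases "\<tau> = 0")
        case True
        have "conv 0 = 0" by (simp add: conv_def)
        then show ?thesis using ode'[of 0] True II0 I0M I00 bpos by simp
      next
        case False
        then have \<tau>p: "\<tau> > 0" using \<tau>0 by simp
        show ?thesis
        proof (rule ccontr)
          assume "\<not> I' \<tau> \<ge> 0"
          then have "- I' \<tau> > 0" by simp
          then obtain d where d: "d > 0" "\<forall>x\<in>{0..}. dist x \<tau> < d \<longrightarrow> dist (I' x) (I' \<tau>) < - I' \<tau>"
            using cont_at by blast
          define x where "x = \<tau> - min d \<tau> / 2"
          have x: "0 \<le> x" "x < \<tau>" "dist x \<tau> < d" using d \<tau>p by (auto simp: x_def dist_real_def)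
          then have "dist (I' x) (I' \<tau>) < - I' \<tau>" using d by auto
          then have "I' x < 0" by (auto simp: dist_real_def)
          then show False using A[OF x(1,2)] by simp
        qed
      qed
      have I'\<tau>: "I' \<tau> = 0" using C D by simp
      have I\<tau>pos: "I \<tau> > 0" using mono\<tau>[of 0 \<tau>] \<tau>0 II0 I0p by simp
      have "conv \<tau> \<le> I \<tau> * G \<tau>" by (rule convU[OF \<tau>0]) (use mono\<tau> \<tau>0 in auto)
      moreover have "I \<tau> * G \<tau> < I \<tau>" using Glt1[OF \<tau>0] I\<tau>pos by simp
      ultimately have h\<tau>: "I \<tau> - conv \<tau> > 0" by simp
      have "\<beta> * (M - I \<tau>) * (I \<tau> - conv \<tau>) = 0" using ode'[OF \<tau>0] I'\<tau> by simp
      then have "I \<tau> = M" using bpos h\<tau> by simp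
      then have zero: "I' t = 0" if "t \<ge> \<tau>" for t
        using uniqM[OF \<tau>0 _ that] ode'[of t] that \<tau>0 by simp
      have "I' t0 = 0" using zero[OF \<tau>le[OF \<open>t0 \<in> S\<close>]] .
      then show False using \<open>\<not> I' t0 \<ge> 0\<close> by simp
    qed
    have Imono: "I x \<le> I y" if "0 \<le> x" "x \<le> y" for x y
    proof (rule DERIV_nonneg_imp_increasing_open[OF that(2)])
      fix z assume z: "x < z" "z < y"
      show "\<exists>d. (I has_real_derivative d) (at z) \<and> 0 \<le> d"
        using der[of z] nonneg z that by (intro exI[of _ "I' z"]) auto
    next
      show "continuous_on {x..y} I" by (rule contIS) (use that in auto)
    qed
    have Ige: "I t \<ge> I0" if "t \<ge> 0" for t using Imono[of 0 t] that II0 by simp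
    have hpos: "I t - conv t > 0" if "t \<ge> 0" for t
    proof -
      have "conv t \<le> I t * G t" by (rule convU[OF that]) (use Imono that in auto)
      moreover have "I t * G t < I t" using Glt1[OF that] Ige[OF that] I0p by simp
      ultimately show ?thesis by simp
    qed
    have IleM: "I t \<le> M" if "t \<ge> 0" for t
    proof -
      have "0 \<le> I' t" using nonneg that by blast
      then have "0 \<le> \<beta> * (M - I t) * (I t - conv t)" by (simp only: ode'[OF that])
      then have "0 \<le> (M - I t)" using bpos hpos[OF that] by (simp add: zero_le_mult_iff)
      then show ?thesis by simp
    qed
    define L where "L = (SUP x\<in>{0..}. I x)"
    have IL: "(I \<longlongrightarrow> L) at_top" unfolding L_def
      by (rule mono_tendsto_sup[where B=M]) (use Imono IleM in auto)
    define c where "c = (SUP x\<in>{0..}. G x)"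
    have Gc: "(G \<longlongrightarrow> c) at_top" unfolding c_def
      by (rule mono_tendsto_sup[where B=1]) (use Gmono Glt1 in \<open>auto intro: less_imp_le\<close>)
    have lowlim: "((\<lambda>t. I (t/2) * G (t/2)) \<longlongrightarrow> L*c) at_top"
      by (intro tendsto_mult filterlim_compose[OF IL half_at_top] filterlim_compose[OF Gc half_at_top])
    have uplim: "((\<lambda>t. I t * G t) \<longlongrightarrow> L*c) at_top" by (intro tendsto_mult IL Gc)
    have ev1: "\<forall>\<^sub>F t in at_top. I (t/2) * G (t/2) \<le> conv t"
      unfolding eventually_at_top_linorder
    proof (intro exI[of _ 0] allI impI)
      fix t :: real assume t: "t \<ge> 0"
      show "I (t/2) * G (t/2) \<le> conv t"
        by (rule convL[OF t]) (use Imono Ige I0p in \<open>auto intro: less_imp_le order.trans\<close>)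
    qed
    have ev2: "\<forall>\<^sub>F t in at_top. conv t \<le> I t * G t"
      unfolding eventually_at_top_linorder
      by (intro exI[of _ 0] allI impI convU) (use Imono in auto)
    have convlim: "(conv \<longlongrightarrow> L*c) at_top" by (rule tendsto_sandwich[OF ev1 ev2 lowlim uplim])
    define A where "A = \<beta> * (M - L) * (L - L*c)"
    have lim2: "((\<lambda>t. \<beta> * (M - I t) * (I t - conv t)) \<longlongrightarrow> A) at_top"
      unfolding A_def by (intro tendsto_intros IL convlim)
    have ev3: "\<forall>\<^sub>F t in at_top. \<beta> * (M - I t) * (I t - conv t) = I' t"
      unfolding eventually_at_top_linorder by (intro exI[of _ 0] allI impI) (simp add: ode')
    have I'lim: "(I' \<longlongrightarrow> A) at_top" by (rule tendsto_cong[THEN iffD1, OF ev3 lim2])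
    have A0: "A \<ge> 0"
    proof (rule tendsto_lowerbound[OF I'lim])
      show "\<forall>\<^sub>F t in at_top. 0 \<le> I' t"
        unfolding eventually_at_top_linorder by (intro exI[of _ 0] allI impI) (use nonneg in auto)
    qed simp
    have "A = 0"
    proof (rule ccontr)
      assume "A \<noteq> 0"
      then have Ap: "A > 0" using A0 by simp
      have "\<forall>\<^sub>F t in at_top. A/2 < I' t" using order_tendstoD(1)[OF I'lim, of "A/2"] Ap by linarith
      then obtain T0 where T0: "\<And>t. t \<ge> T0 \<Longrightarrow> A/2 < I' t" by (auto simp: eventually_at_top_linorder)
      define T1 where "T1 = max T0 0"
      define T2 where "T2 = T1 + 2*(M+1)/A"
      have T12: "T1 \<le> T2" "T1 \<ge> 0" using Ap Mpos by (auto simp: T1_def T2_def)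
      have "I T1 - A/2 * T1 \<le> I T2 - A/2 * T2"
      proof (rule DERIV_nonneg_imp_increasing_open[OF T12(1)])
        fix z assume z: "T1 < z" "z < T2"
        have "z > 0" "z \<ge> T0" using z by (auto simp: T1_def)
        then show "\<exists>d. ((\<lambda>x. I x - A/2 * x) has_real_derivative d) (at z) \<and> 0 \<le> d"
          using der[of z] T0[of z] by (intro exI[of _ "I' z - A/2"]) (auto intro!: derivative_eq_intros)
      next
        show "continuous_on {T1..T2} (\<lambda>x. I x - A/2 * x)"
          by (intro continuous_intros contIS) (use T12 in auto)
      qed
      moreover have "A/2 * (T2 - T1) = M + 1" using Ap by (simp add: T2_def field_simps)
      moreover have "I T1 \<ge> 0" using Ige[OF T12(2)] I00 by simp
      moreover have "I T2 \<le> M" using IleM T12 by simp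
      ultimately show False by (simp add: algebra_simps)
    qed
    then show ?thesis using I'lim by simp
  qed
qed

end
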